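(* Let $(G_1,\oplus_1,\otimes_1)$ and $(G_2,\oplus_2,\otimes_2)$ be generalized gyrovector spaces (GGV's), with gyrometrics $\varrho_1$ and $\varrho_2$ respectively. Suppose $T:G_1\to G_2$ is a surjection that preserves the gyrometric, i.e. $\varrho_2(T\mathbf a,T\mathbf b)=\varrho_1(\mathbf a,\mathbf b)$ for all $\mathbf a,\mathbf b\in G_1$. Then $T$ preserves gyromidpoints: for all $\mathbf a,\mathbf b\in G_1$, \[\mathbf p_2(T\mathbf a,T\mathbf b)=T\,\mathbf p_1(\mathbf a,\mathbf b),\] where $\mathbf p_i$ denotes the gyromidpoint in $G_i$.
   Context: A gyrogroup $(G,\oplus)$ is a set with a binary operation $\oplus$ such that: there is $e\in G$ with $e\oplus a=a$ for all $a$; each $a$ has $\ominus a$ with $\ominus a\oplus a=e$; for all $a,b$ there is an automorphism $\mathrm{gyr}[a,b]$ of $(G,\oplus)$ with $a\oplus(b\oplus c)=(a\oplus b)\oplus\mathrm{gyr}[a,b]c$ for all $c$ (left gyroassociativity); and $\mathrm{gyr}[a,b]=\mathrm{gyr}[a\oplus b,b]$ (left loop property). It is gyrocommutative if $a\oplus b=\mathrm{gyr}[a,b](b\oplus a)$. Write $a\ominus b=a\oplus(\ominus b)$. A generalized gyrovector space (GGV) $(G,\oplus,\otimes)$ consists of a gyrocommutative gyrogroup $(G,\oplus)$, a map $\otimes:\mathbb R\times G\to G$, and an injection $\phi$ of $G$ into a real normed space $(V,\|\cdot\|)$ such that for all $a,b,u,v\in G$ and $r,r_1,r_2\in\mathbb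 R$: (GGV0) $\|\phi(\mathrm{gyr}[u,v]a)\|=\|\phi(a)\|$; (GGV1) $1\otimes a=a$; (GGV2) $(r_1+r_2)\otimes a=(r_1\otimes a)\oplus(r_2\otimes a)$; (GGV3) $(r_1r_2)\otimes a=r_1\otimes(r_2\otimes a)$; (GGV4) $\phi(|r|\otimes a)/\|\phi(r\otimes a)\|=\phi(a)/\|\phi(a)\|$ for $a\neq e$, $r\neq 0$; (GGV5) $\mathrm{gyr}[u,v](r\otimes a)=r\otimes\mathrm{gyr}[u,v]a$; (GGV6) $\mathrm{gyr}[r_1\otimes v,r_2\otimes v]$ is the identity map; (GGVV) the set $\|\phi(G)\|=\{\pm\|\phi(a)\|:a\in G\}\subset\mathbb R$ is a real one-dimensional vector space under some addition $\oplus'$ and scalar multiplication $\otimes'$; (GGV7) $\|\phi(r\otimes a)\|=|r|\otimes'\|\phi(a)\|$; (GGV8) $\|\phi(a\oplus b)\|\le\|\phi(a)\|\oplus'\|\phi(b)\|$ (usual order of $\mathbb R$). The gyrometric of a GGV is $\varrho(a,b)=\|\phi(\ominus a\oplus b)\|$. The gyromidpoint of $a,b$ is $\mathbf p(a,b)=\tfrac12\otimes(a\boxplus b)$, where $a\boxplus b=a\oplus\mathrm{gyr}[a,\ominus b]b$ is the cooperation. *)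

theory Defs
  imports "HOL-Analysis.Analysis"
begin

definition gyrogroup ::
  "('a \<Rightarrow> 'a \<Rightarrow> 'a) \<Rightarrow> 'a \<Rightarrow> ('a \<Rightarrow> 'a) \<Rightarrow> ('a \<Rightarrow> 'a \<Rightarrow> 'a \<Rightarrow> 'a) \<Rightarrow> bool" where
  "gyrogroup gplus e neg gyr \<longleftrightarrow>
     (\<forall>a. gplus e a = a) \<and>
     (\<forall>a. gplus (neg a) a = e) \<and>
     (\<forall>a b. bij (gyr a b) \<and> (\<forall>x y. gyr a b (gplus x y) = gplus (gyr a b x) (gyr a b y))) \<and>
     (\<forall>a b c. gplus a (gplus b c) = gplus (gplus a b) (gyr a b c)) \<and>
     (\<forall>a b. gyr a b = gyr (gplus a b) b)"

definition gyrocommutative_gyrogroup ::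
  "('a \<Rightarrow> 'a \<Rightarrow> 'a) \<Rightarrow> 'a \<Rightarrow> ('a \<Rightarrow> 'a) \<Rightarrow> ('a \<Rightarrow> 'a \<Rightarrow> 'a \<Rightarrow> 'a) \<Rightarrow> bool" where
  "gyrocommutative_gyrogroup gplus e neg gyr \<longleftrightarrow>
     gyrogroup gplus e neg gyr \<and> (\<forall>a b. gplus a b = gyr a b (gplus b a))"

definition real_vs_on :: "real set \<Rightarrow> (real \<Rightarrow> real \<Rightarrow> real) \<Rightarrow> (real \<Rightarrow> real \<Rightarrow> real) \<Rightarrow> bool" where
  "real_vs_on S addp smulp \<longleftrightarrow>
     (\<forall>x\<in>S. \<forall>y\<in>S. addp x y \<in> S) \<and>
     (\<forall>r. \<forall>x\<in>S. smulp r x \<in> S) \<and>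
     (\<forall>x\<in>S. \<forall>y\<in>S. \<forall>z\<in>S. addp (addp x y) z = addp x (addp y z)) \<and>
     (\<forall>x\<in>S. \<forall>y\<in>S. addp x y = addp y x) \<and>
     (\<exists>z\<in>S. (\<forall>x\<in>S. addp z x = x) \<and> (\<forall>x\<in>S. \<exists>y\<in>S. addp y x = z)) \<and>
     (\<forall>r. \<forall>x\<in>S. \<forall>y\<in>S. smulp r (addp x y) = addp (smulp r x) (smulp r y)) \<and>
     (\<forall>r s. \<forall>x\<in>S. smulp (r + s) x = addp (smulp r x) (smulp s x)) \<and>
     (\<forall>r s. \<forall>x\<in>S. smulp (r * s) x = smulp r (smulp s x)) \<and>
     (\<forall>x\<in>S. smulp 1 x = x)"

text \<open>One-dimensional: spanned by a single nonzero vector (the zero vector is smulp 0 v).\<close>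

definition real_vs_1dim_on :: "real set \<Rightarrow> (real \<Rightarrow> real \<Rightarrow> real) \<Rightarrow> (real \<Rightarrow> real \<Rightarrow> real) \<Rightarrow> bool" where
  "real_vs_1dim_on S addp smulp \<longleftrightarrow>
     real_vs_on S addp smulp \<and>
     (\<exists>v\<in>S. v \<noteq> smulp 0 v \<and> (\<forall>x\<in>S. \<exists>r. x = smulp r v))"

definition GGV ::
  "('a \<Rightarrow> 'a \<Rightarrow> 'a) \<Rightarrow> 'a \<Rightarrow> ('a \<Rightarrow> 'a) \<Rightarrow> ('a \<Rightarrow> 'a \<Rightarrow> 'a \<Rightarrow> 'a)
   \<Rightarrow> (real \<Rightarrow> 'a \<Rightarrow> 'a) \<Rightarrow> ('a \<Rightarrow> 'v::real_normed_vector) \<Rightarrow> bool" where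
  "GGV gplus e neg gyr smul phi \<longleftrightarrow>
     gyrocommutative_gyrogroup gplus e neg gyr \<and>
     inj phi \<and>
     (\<forall>u v a. norm (phi (gyr u v a)) = norm (phi a)) \<and>
     (\<forall>a. smul 1 a = a) \<and>
     (\<forall>r1 r2 a. smul (r1 + r2) a = gplus (smul r1 a) (smul r2 a)) \<and>
     (\<forall>r1 r2 a. smul (r1 * r2) a = smul r1 (smul r2 a)) \<and>
     (\<forall>r a. a \<noteq> e \<longrightarrow> r \<noteq> 0 \<longrightarrow>
        phi (smul \<bar>r\<bar> a) /\<^sub>R norm (phi (smul r a)) = phi a /\<^sub>R norm (phi a)) \<and>
     (\<forall>u v r a. gyr u v (smul r a) = smul r (gyr u v a)) \<and>
     (\<forall>r1 r2 v. gyr (smul r1 v) (smul r2 v) = id) \<and>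
     (\<exists>addp smulp.
        real_vs_1dim_on {t. \<exists>a. t = norm (phi a) \<or> t = - norm (phi a)} addp smulp \<and>
        (\<forall>r a. norm (phi (smul r a)) = smulp \<bar>r\<bar> (norm (phi a))) \<and>
        (\<forall>a b. norm (phi (gplus a b)) \<le> addp (norm (phi a)) (norm (phi b))))"

definition gyrometric :: "('a \<Rightarrow> 'a \<Rightarrow> 'a) \<Rightarrow> ('a \<Rightarrow> 'a) \<Rightarrow> ('a \<Rightarrow> 'v::real_normed_vector) \<Rightarrow> 'a \<Rightarrow> 'a \<Rightarrow> real" where
  "gyrometric gplus neg phi a b = norm (phi (gplus (neg a) b))"

definition coop :: "('a \<Rightarrow> 'a \<Rightarrow> 'a) \<Rightarrow> ('a \<Rightarrow> 'a) \<Rightarrow> ('a \<Rightarrow> 'a \<Rightarrow> 'a \<Rightarrow> 'a) \<Rightarrow> 'a \<Rightarrow> 'a \<Rightarrow> 'a" where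
  "coop gplus neg gyr a b = gplus a (gyr a (neg b) b)"

definition gyromidpoint ::
  "('a \<Rightarrow> 'a \<Rightarrow> 'a) \<Rightarrow> ('a \<Rightarrow> 'a) \<Rightarrow> ('a \<Rightarrow> 'a \<Rightarrow> 'a \<Rightarrow> 'a) \<Rightarrow> (real \<Rightarrow> 'a \<Rightarrow> 'a) \<Rightarrow> 'a \<Rightarrow> 'a \<Rightarrow> 'a" where
  "gyromidpoint gplus neg gyr smul a b = smul (1/2) (coop gplus neg gyr a b)"

end

theory Submission imports Defs begin

locale gyc =
  fixes pl :: "'a \<Rightarrow> 'a \<Rightarrow> 'a" and e :: 'a and ng :: "'a \<Rightarrow> 'a"
    and gy :: "'a \<Rightarrow> 'a \<Rightarrow> 'a \<Rightarrow> 'a"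
  assumes G: "gyrocommutative_gyrogroup pl e ng gy"
begin

lemma lid: "pl e a = a" using G unfolding gyrocommutative_gyrogroup_def gyrogroup_def by blast
lemma linv: "pl (ng a) a = e" using G unfolding gyrocommutative_gyrogroup_def gyrogroup_def by blast
lemma gbij: "bij (gy a b)" using G unfolding gyrocommutative_gyrogroup_def gyrogroup_def by blast
lemma ghom: "gy a b (pl x y) = pl (gy a b x) (gy a b y)"
  using G unfolding gyrocommutative_gyrogroup_def gyrogroup_def by blast
lemma assoc: "pl a (pl b c) = pl (pl a b) (gy a b c)"
  using G unfolding gyrocommutative_gyrogroup_def gyrogroup_def by blast
lemma LL: "gy a b = gy (pl a b) b"
  using G unfolding gyrocommutative_gyrogroup_def gyrogroup_def by blast
lemma comm: "pl a b = gy a b (pl b a)"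
  using G unfolding gyrocommutative_gyrogroup_def by blast

lemma ginj: "gy a b x = gy a b y \<Longrightarrow> x = y"
  using gbij[of a b] by (meson bij_def injD)
lemma gsurj: "\<exists>y. x = gy a b y"
  using gbij[of a b] by (meson bij_def surjD)

lemma lcan0: "pl (ng a) (pl a x) = gy (ng a) a x"
  using assoc[of "ng a" a x] by (simp add: linv lid)

lemma gy_e_left: "gy e a x = x"
proof -
  have "pl e (pl a x) = pl (pl e a) (gy e a x)" by (rule assoc)
  hence "pl a x = pl a (gy e a x)" by (simp add: lid)
  hence "pl (ng a) (pl a x) = pl (ng a) (pl a (gy e a x))" by simp
  hence "gy (ng a) a x = gy (ng a) a (gy e a x)" by (simp add: lcan0)
  thus ?thesis using ginj by metis
qed

lemma lcan: "pl (ng a) (pl a x) = x"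
proof -
  have "gy (ng a) a = gy e a" using LL[of "ng a" a] by (simp add: linv)
  thus ?thesis by (simp add: lcan0 gy_e_left)
qed

lemma lcanI: "pl a x = pl a y \<Longrightarrow> x = y"
  by (metis lcan)

lemma rid: "pl a e = a"
  by (metis lcan linv lcanI)

lemma rinv: "pl a (ng a) = e"
  by (metis lcan rid lcanI)

lemma negneg: "ng (ng a) = a"
  by (metis linv rinv lcanI)

lemma lcan2: "pl a (pl (ng a) x) = x"
  by (metis lcan negneg)

lemma gy_e: "gy a b e = e"
proof -
  have "gy a b e = pl (gy a b e) (gy a b e)" by (metis ghom lid)
  thus ?thesis by (metis rid lcanI)
qed

lemma inv_unique: "pl x y = e \<Longrightarrow> y = ng x"
  by (metis rinv lcanI)

lemma neg_e: "ng e = e"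
  by (metis inv_unique lid)

lemma gy_neg: "gy a b (ng x) = ng (gy a b x)"
proof -
  have "pl (gy a b x) (gy a b (ng x)) = e" by (metis ghom rinv gy_e)
  thus ?thesis by (rule inv_unique)
qed

lemma transl: "pl (ng (pl a x)) (pl a y) = gy a x (pl (ng x) y)"
proof -
  have "pl a y = pl (pl a x) (gy a x (pl (ng x) y))"
    by (metis assoc lcan2)
  thus ?thesis by (metis lcan)
qed

lemma gyrator: "gy a b x = pl (ng (pl a b)) (pl a (pl b x))"
  by (metis assoc lcan)

lemma suminv: "ng (pl a b) = gy a b (pl (ng b) (ng a))"
proof -
  have "pl (pl a b) (gy a b (pl (ng b) (ng a))) = e"
    by (metis assoc lcan2 rinv)
  thus ?thesis by (metis inv_unique)
qed

lemma conj: "gy (gy u v x) (gy u v y) (gy u v z) = gy u v (gy x y z)"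
proof -
  have "pl (gy u v x) (pl (gy u v y) (gy u v z)) = gy u v (pl x (pl y z))" by (simp add: ghom)
  also have "\<dots> = pl (pl (gy u v x) (gy u v y)) (gy u v (gy x y z))" by (simp add: assoc ghom)
  finally show ?thesis by (metis assoc lcanI)
qed

lemma rev: "gy b (pl a b) (gy a b x) = x"
proof -
  have "pl (ng a) (pl (pl a b) (gy a b x)) = pl b (gy (ng a) (pl a b) (gy a b x))"
    by (metis assoc lcan)
  moreover have "gy (ng a) (pl a b) = gy b (pl a b)" by (metis LL lcan)
  moreover have "pl (ng a) (pl (pl a b) (gy a b x)) = pl b x" by (metis assoc lcan)
  ultimately show ?thesis by (metis lcanI)
qed

lemma rloop: "gy a b y = gy a (pl b a) y"
proof -
  have key: "gy (pl a b) (gy a b a) (gy a b x) = gy a (pl b a) (gy b a x)" for x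
  proof -
    have "pl a (pl b (pl a x)) = pl (pl a b) (pl (gy a b a) (gy a b x))" by (simp only: assoc[of a b] ghom)
    also have "\<dots> = pl (pl (pl a b) (gy a b a)) (gy (pl a b) (gy a b a) (gy a b x))" by (rule assoc)
    finally have 1: "pl a (pl b (pl a x)) = pl (pl (pl a b) (gy a b a)) (gy (pl a b) (gy a b a) (gy a b x))" .
    have "pl a (pl b (pl a x)) = pl a (pl (pl b a) (gy b a x))" by (simp only: assoc[of b a x])
    also have "\<dots> = pl (pl a (pl b a)) (gy a (pl b a) (gy b a x))" by (rule assoc)
    finally have 2: "pl a (pl b (pl a x)) = pl (pl a (pl b a)) (gy a (pl b a) (gy b a x))" .
    have 3: "pl (pl a b) (gy a b a) = pl a (pl b a)" by (rule assoc[symmetric])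
    from 1 2 3 have "pl (pl (pl a b) (gy a b a)) (gy (pl a b) (gy a b a) (gy a b x)) = pl (pl (pl a b) (gy a b a)) (gy a (pl b a) (gy b a x))" by simp
    thus ?thesis by (rule lcanI)
  qed
  have "gy (pl a b) (gy a b a) (gy a b x) = gy a b (gy b a x)" for x
  proof -
    have "gy (pl a b) (gy a b a) (gy a b x) = gy (gy a b (pl b a)) (gy a b a) (gy a b x)"
      by (metis comm)
    also have "\<dots> = gy a b (gy (pl b a) a x)" by (rule conj)
    also have "\<dots> = gy a b (gy b a x)" by (metis LL)
    finally show ?thesis .
  qed
  with key have "gy a b (gy b a x) = gy a (pl b a) (gy b a x)" for x by metis
  thus ?thesis by (metis gsurj)
qed

lemma invsym: "gy b a (gy a b x) = x"
  by (metis rev rloop)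

end

lemma aux1: "(p::real)*q \<ge> 0 \<Longrightarrow> \<bar>p+q\<bar> = \<bar>p\<bar> + \<bar>q\<bar>"
  using zero_le_mult_iff by force
lemma aux2: "(w::real)*k \<ge> 0 \<Longrightarrow> k \<noteq> 0 \<Longrightarrow> w/k \<ge> 0"
  by (simp add: zero_le_divide_iff zero_le_mult_iff)
lemma aux3: "\<bar>w::real\<bar> < \<bar>k\<bar> \<Longrightarrow> w/k \<le> 1"
  by (smt (verit) le_divide_eq_1)

locale ggv = gyc +
  fixes sm :: "real \<Rightarrow> 'a \<Rightarrow> 'a" and ph :: "'a \<Rightarrow> 'v::real_normed_vector"
    and ad :: "real \<Rightarrow> real \<Rightarrow> real" and sp :: "real \<Rightarrow> real \<Rightarrow> real"
  assumes phinj: "inj ph"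
    and gnorm: "\<And>u v a. norm (ph (gy u v a)) = norm (ph a)"
    and s1: "\<And>a. sm 1 a = a"
    and s2: "\<And>r1 r2 a. sm (r1 + r2) a = pl (sm r1 a) (sm r2 a)"
    and s3: "\<And>r1 r2 a. sm (r1 * r2) a = sm r1 (sm r2 a)"
    and s4: "\<And>r a. a \<noteq> e \<Longrightarrow> r \<noteq> 0 \<Longrightarrow>
        ph (sm \<bar>r\<bar> a) /\<^sub>R norm (ph (sm r a)) = ph a /\<^sub>R norm (ph a)"
    and s6: "\<And>r1 r2 v. gy (sm r1 v) (sm r2 v) = id"
    and vs: "real_vs_1dim_on {t. \<exists>a. t = norm (ph a) \<or> t = - norm (ph a)} ad sp"
    and s7: "\<And>r a. norm (ph (sm r a)) = sp \<bar>r\<bar> (norm (ph a))"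
    and s8: "\<And>a b. norm (ph (pl a b)) \<le> ad (norm (ph a)) (norm (ph b))"
begin

definition "N a = norm (ph a)"
definition "rho x y = N (pl (ng x) y)"
definition "mid a b = pl a (sm (1/2) (pl (ng a) b))"
definition "psi m x = pl m (ng (pl (ng m) x))"

lemma s0: "sm 0 a = e"
proof -
  have "pl (sm 0 a) (sm 0 a) = pl (sm 0 a) e" using s2[of 0 0 a] by (simp add: rid)
  thus ?thesis by (rule lcanI)
qed

lemma sneg: "sm (-1) a = ng a"
proof -
  have "pl a (sm (-1) a) = e" using s2[of 1 "-1" a] by (simp add: s1 s0)
  thus ?thesis by (rule inv_unique)
qed

lemma gyid: "gy c c x = x"
  using s6[of 1 c 1] by (simp add: s1)

lemma two: "sm 2 a = pl a a"
  using s2[of 1 1 a] by (simp add: s1)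

lemma half_twice: "pl (sm (1/2) w) (sm (1/2) w) = w"
proof -
  have "pl (sm (1/2) w) (sm (1/2) w) = sm 2 (sm (1/2) w)" by (simp add: two)
  also have "\<dots> = w" using s3[of 2 "1/2" w] by (simp add: s1)
  finally show ?thesis .
qed

lemma half_neg: "pl (ng (sm (1/2) w)) w = sm (1/2) w"
proof -
  have "ng (sm (1/2) w) = sm (-1/2) w" using s3[of "-1" "1/2" w] by (simp add: sneg)
  hence "pl (ng (sm (1/2) w)) w = pl (sm (-1/2) w) (sm 1 w)" by (simp add: s1)
  also have "\<dots> = sm (1/2) w" using s2[of "-1/2" 1 w] by simp
  finally show ?thesis .
qed

lemma mid_a: "pl (ng (mid a b)) a = gy a (sm (1/2) (pl (ng a) b)) (ng (sm (1/2) (pl (ng a) b)))"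
  unfolding mid_def using transl[of a "sm (1/2) (pl (ng a) b)" e] by (simp add: rid)

lemma mid_b: "pl (ng (mid a b)) b = gy a (sm (1/2) (pl (ng a) b)) (sm (1/2) (pl (ng a) b))"
proof -
  have "b = pl a (pl (ng a) b)" by (simp add: lcan2)
  hence "pl (ng (mid a b)) b = pl (ng (pl a (sm (1/2) (pl (ng a) b)))) (pl a (pl (ng a) b))"
    unfolding mid_def by simp
  also have "\<dots> = gy a (sm (1/2) (pl (ng a) b)) (sm (1/2) (pl (ng a) b))"
    by (simp add: transl half_neg)
  finally show ?thesis .
qed

lemma mid_ab: "pl (ng (mid a b)) b = ng (pl (ng (mid a b)) a)"
  by (simp add: mid_a mid_b gy_neg negneg)

lemma psi_a: "psi (mid a b) a = b"
  unfolding psi_def mid_ab[symmetric] lcan2 ..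

lemma psi_b: "psi (mid a b) b = a"
  unfolding psi_def mid_ab negneg lcan2 ..

lemma psi_psi: "psi m (psi m x) = x"
  unfolding psi_def by (simp add: lcan negneg lcan2)

lemma psi_m: "psi m m = m"
  unfolding psi_def by (simp add: linv rinv neg_e rid)

lemma midpoint_eq: "gyromidpoint pl ng gy sm a b = mid a b"
proof -
  define w where "w = pl (ng a) b"
  define c where "c = sm (1/2) w"
  have b: "b = pl a w" unfolding w_def by (simp add: lcan2)
  have X: "ng (pl a (ng b)) = w"
  proof -
    have "ng (pl a (ng b)) = ng (gy a (ng b) (pl (ng b) a))" by (simp only: comm[of a "ng b"])
    also have "\<dots> = gy a (ng b) (ng (pl (ng b) a))" by (simp add: gy_neg)
    also have "\<dots> = gy a (ng b) (gy (ng b) a w)" unfolding w_def using suminv[of "ng b" a] by (simp add: negneg)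
    also have "\<dots> = w" by (rule invsym)
    finally show ?thesis .
  qed
  have "gy a (ng b) b = pl (ng (pl a (ng b))) (pl a (pl (ng b) b))" by (rule gyrator)
  also have "\<dots> = pl w a" by (simp add: X linv rid)
  finally have coopeq: "coop pl ng gy a b = pl a (pl w a)" unfolding coop_def by simp
  have "pl (mid a b) (mid a b) = pl (pl a c) (pl a c)" unfolding mid_def c_def w_def by simp
  also have "\<dots> = pl a (pl c (pl c a))"
  proof -
    have "gy a c (pl c a) = pl a c" by (rule comm[symmetric])
    thus ?thesis by (simp only: assoc[of a c "pl c a"])
  qed
  also have "\<dots> = pl a (pl (pl c c) a)" using assoc[of c c a] by (simp add: gyid)
  also have "\<dots> = pl a (pl w a)" unfolding c_def by (simp add: half_twice)
  finally have "sm 2 (mid a b) = coop pl ng gy a b" by (simp add: two coopeq)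
  hence "sm (1/2) (coop pl ng gy a b) = sm (1/2) (sm 2 (mid a b))" by simp
  also have "\<dots> = mid a b" using s3[of "1/2" 2 "mid a b", symmetric] by (simp add: s1)
  finally show ?thesis unfolding gyromidpoint_def .
qed


definition "SS = {t. \<exists>a. t = norm (ph a) \<or> t = - norm (ph a)}"

lemma vsS: "real_vs_on SS ad sp" using vs unfolding SS_def real_vs_1dim_on_def by blast
lemma vb_ex: "\<exists>v. v\<in>SS \<and> v \<noteq> sp 0 v \<and> (\<forall>x\<in>SS. \<exists>r. x = sp r v)"
  using vs unfolding SS_def real_vs_1dim_on_def by blast

definition "vb = (SOME v. v\<in>SS \<and> v \<noteq> sp 0 v \<and> (\<forall>x\<in>SS. \<exists>r. x = sp r v))"
lemma vb: "vb\<in>SS" "vb \<noteq> sp 0 vb" "\<And>x. x\<in>SS \<Longrightarrow> \<exists>r. x = sp r vb"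
  using someI_ex[OF vb_ex] unfolding vb_def[symmetric] by auto

lemma ad_cl: "x\<in>SS \<Longrightarrow> y\<in>SS \<Longrightarrow> ad x y \<in> SS" using vsS[unfolded real_vs_on_def] by auto
lemma sp_cl: "x\<in>SS \<Longrightarrow> sp r x \<in> SS" using vsS[unfolded real_vs_on_def] by auto
lemma sp_distr: "x\<in>SS \<Longrightarrow> sp (r + s) x = ad (sp r x) (sp s x)" using vsS[unfolded real_vs_on_def] by auto
lemma sp_mult: "x\<in>SS \<Longrightarrow> sp (r * s) x = sp r (sp s x)" using vsS[unfolded real_vs_on_def] by auto
lemma sp_one: "x\<in>SS \<Longrightarrow> sp 1 x = x" using vsS[unfolded real_vs_on_def] by auto

lemma uniq: assumes "sp r vb = sp s vb" shows "r = s"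
proof (rule ccontr)
  assume ne: "r \<noteq> s"
  have "sp (r + - s) vb = ad (sp r vb) (sp (-s) vb)" using sp_distr vb(1) by blast
  also have "\<dots> = ad (sp s vb) (sp (-s) vb)" using assms by simp
  also have "\<dots> = sp (s + - s) vb" using sp_distr vb(1) by metis
  finally have z: "sp (r - s) vb = sp 0 vb" by simp
  have "vb = sp ((1/(r-s)) * (r-s)) vb" using ne sp_one vb(1) by simp
  also have "\<dots> = sp (1/(r-s)) (sp 0 vb)" using sp_mult vb(1) z by metis
  also have "\<dots> = sp ((1/(r-s)) * 0) vb" using sp_mult vb(1) by metis
  finally show False using vb(2) by simp
qed

definition "kap t = (THE r. t = sp r vb)"

lemma kap_sp: "kap (sp r vb) = r"
  unfolding kap_def by (rule the_equality) (auto intro: uniq)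

lemma kap: "t\<in>SS \<Longrightarrow> t = sp (kap t) vb"
  using vb(3) kap_sp by metis

lemma kap_inj: "x\<in>SS \<Longrightarrow> y\<in>SS \<Longrightarrow> kap x = kap y \<Longrightarrow> x = y"
  using kap by metis

lemma kap_ad: assumes "x\<in>SS" "y\<in>SS" shows "kap (ad x y) = kap x + kap y"
proof -
  have "ad x y = ad (sp (kap x) vb) (sp (kap y) vb)" using kap assms by metis
  also have "\<dots> = sp (kap x + kap y) vb" using sp_distr vb(1) by metis
  finally show ?thesis by (simp add: kap_sp)
qed

lemma kap_sp2: assumes "x\<in>SS" shows "kap (sp r x) = r * kap x"
proof -
  have "sp r x = sp r (sp (kap x) vb)" using kap assms by metis
  also have "\<dots> = sp (r * kap x) vb" using sp_mult vb(1) by metis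
  finally show ?thesis by (simp add: kap_sp)
qed

lemma N_S: "N a \<in> SS" unfolding N_def SS_def by blast
lemma negN_S: "- N a \<in> SS" unfolding N_def SS_def by blast
lemma N_ge: "N a \<ge> 0" unfolding N_def by simp

lemma kap_Nsm: "kap (N (sm r a)) = \<bar>r\<bar> * kap (N a)"
  using s7[of r a] kap_sp2[OF N_S] unfolding N_def by metis

lemma N_e: "kap (N e) = 0"
  using kap_Nsm[of 0 e] by (simp add: s0)

lemma sign: "(\<forall>a. kap (N a) \<ge> 0) \<or> (\<forall>a. kap (N a) \<le> 0)"
proof (rule ccontr)
  assume "\<not> ?thesis"
  then obtain a b where pa: "kap (N a) < 0" and pb: "kap (N b) > 0" by (auto simp: not_le)
  have all: "t \<ge> 0" if t: "t \<in> SS" for t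
  proof (cases "kap t \<ge> 0")
    case True
    let ?x = "N (sm (kap t / kap (N b)) b)"
    have "kap ?x = kap t" using pb True by (simp add: kap_Nsm)
    hence "?x = t" using kap_inj N_S t by blast
    thus ?thesis using N_ge by metis
  next
    case False
    let ?x = "N (sm (kap t / kap (N a)) a)"
    have "\<bar>kap t / kap (N a)\<bar> = kap t / kap (N a)" using pa False by simp
    hence "kap ?x = kap t" using pa by (simp add: kap_Nsm)
    hence "?x = t" using kap_inj N_S t by blast
    thus ?thesis using N_ge by metis
  qed
  have "N a = 0" using all[OF negN_S[of a]] N_ge[of a] by simp
  moreover have "N b = 0" using all[OF negN_S[of b]] N_ge[of b] by simp
  ultimately show False using pa pb by simp
qed

lemma sign2: "kap (N a) * kap (N b) \<ge> 0"
  using sign by (meson mult_nonneg_nonneg mult_nonpos_nonpos)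

lemma sep: assumes "kap (N u) = 0" shows "u = e"
proof (rule ccontr)
  assume ne: "u \<noteq> e"
  have Ne: "N u = N e" using kap_inj N_S assms N_e by metis
  have "kap (N (sm 2 u)) = kap (N u)" using assms kap_Nsm[of 2 u] by simp
  hence N2: "N (sm 2 u) = N u" using kap_inj N_S by blast
  have eq: "ph (sm 2 u) /\<^sub>R N u = ph u /\<^sub>R N u" using s4[OF ne, of 2] N2 unfolding N_def by simp
  show False
  proof (cases "N u = 0")
    case True
    hence "ph u = 0" "ph e = 0" using Ne unfolding N_def by auto
    thus False using phinj ne by (metis injD)
  next
    case False
    hence "ph (sm 2 u) = ph u" using eq by simp
    hence "sm 2 u = u" using phinj by (metis injD)
    hence "pl u u = pl u e" by (simp add: two rid)
    thus False using ne lcanI by blast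
  qed
qed

lemma ray: assumes "0 \<le> l" "l \<le> 1" shows "N (sm l x) \<le> N x"
proof -
  define r where "r = (1+l)/2"
  define s where "s = (1-l)/2"
  have r0: "r \<ge> 0" "s \<ge> 0" using assms unfolding r_def s_def by auto
  have "sm l x = sm (r + - s) x" unfolding r_def s_def by (simp add: field_simps)
  also have "\<dots> = pl (sm r x) (sm (-s) x)" by (rule s2)
  finally have "N (sm l x) \<le> ad (N (sm r x)) (N (sm (-s) x))" using s8 unfolding N_def by simp
  also have "\<dots> = ad (sp r (N x)) (sp s (N x))" using s7 r0 unfolding N_def by simp
  also have "\<dots> = sp (r + s) (N x)" using sp_distr N_S by metis
  also have "\<dots> = N x"
  proof -
    have "r + s = 1" unfolding r_def s_def by (simp add: field_simps)
    thus ?thesis using sp_one N_S by simp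
  qed
  finally show ?thesis .
qed

lemma mono: assumes "N x \<le> ad (N y) (N z)" shows "\<bar>kap (N x)\<bar> \<le> \<bar>kap (N y)\<bar> + \<bar>kap (N z)\<bar>"
proof (rule ccontr)
  assume "\<not> ?thesis"
  hence lt: "\<bar>kap (N y)\<bar> + \<bar>kap (N z)\<bar> < \<bar>kap (N x)\<bar>" by simp
  define w where "w = ad (N y) (N z)"
  have wS: "w \<in> SS" unfolding w_def using ad_cl N_S by blast
  have kw: "kap w = kap (N y) + kap (N z)" unfolding w_def using kap_ad N_S by blast
  define k where "k = kap (N x)"
  have k0: "k \<noteq> 0" using lt unfolding k_def by auto
  have p1: "kap (N y) * k \<ge> 0" "kap (N z) * k \<ge> 0" using sign2 unfolding k_def by auto
  have p2: "kap (N y) * kap (N z) \<ge> 0" using sign2 by auto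
  have aw: "\<bar>kap w\<bar> = \<bar>kap (N y)\<bar> + \<bar>kap (N z)\<bar>" using kw p2 aux1 by simp
  define l where "l = kap w / k"
  have "kap w * k \<ge> 0" using kw p1 by (simp add: distrib_right)
  hence l0: "l \<ge> 0" unfolding l_def using k0 aux2 by blast
  have l1: "l \<le> 1" unfolding l_def using lt aw aux3 unfolding k_def by simp
  have "kap (N (sm l x)) = l * k" using l0 unfolding k_def by (simp add: kap_Nsm)
  also have "\<dots> = kap w" unfolding l_def using k0 by simp
  finally have "N (sm l x) = w" using kap_inj N_S wS by blast
  hence "w \<le> N x" using ray[OF l0 l1, of x] by simp
  hence "N x = w" using assms unfolding w_def by simp
  thus False using lt aw unfolding k_def by simp
qed


lemma N_gy: "N (gy u v a) = N a" unfolding N_def by (rule gnorm)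

lemma N_neg: "N (ng u) = N u"
proof -
  have "N (ng u) = N (sm (-1) u)" by (simp add: sneg)
  also have "\<dots> = sp 1 (N u)" using s7[of "-1" u] unfolding N_def by simp
  also have "\<dots> = N u" using sp_one N_S by blast
  finally show ?thesis .
qed

lemma rho_sym: "rho x y = rho y x"
proof -
  have "ng (pl (ng x) y) = gy (ng x) y (pl (ng y) x)" using suminv[of "ng x" y] by (simp add: negneg)
  hence "N (pl (ng y) x) = N (ng (pl (ng x) y))" by (simp add: N_gy)
  thus ?thesis unfolding rho_def by (simp add: N_neg)
qed

lemma rho_tri: "rho x z \<le> ad (rho x y) (rho y z)"
proof -
  have "pl (ng x) z = pl (ng x) (pl y (pl (ng y) z))" by (simp add: lcan2)
  also have "\<dots> = pl (pl (ng x) y) (gy (ng x) y (pl (ng y) z))" by (rule assoc)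
  finally have "rho x z = N (pl (pl (ng x) y) (gy (ng x) y (pl (ng y) z)))" unfolding rho_def by simp
  also have "\<dots> \<le> ad (N (pl (ng x) y)) (N (gy (ng x) y (pl (ng y) z)))" using s8 unfolding N_def by blast
  finally show ?thesis unfolding rho_def by (simp add: N_gy)
qed

definition "D x y = \<bar>kap (rho x y)\<bar>"

lemma D_sym: "D x y = D y x" unfolding D_def using rho_sym by simp

lemma D_tri: "D x z \<le> D x y + D y z"
proof -
  have "pl (ng x) z = pl (ng x) (pl y (pl (ng y) z))" by (simp add: lcan2)
  also have "\<dots> = pl (pl (ng x) y) (gy (ng x) y (pl (ng y) z))" by (rule assoc)
  finally have "rho x z = N (pl (pl (ng x) y) (gy (ng x) y (pl (ng y) z)))" unfolding rho_def by simp
  also have "\<dots> \<le> ad (N (pl (ng x) y)) (N (gy (ng x) y (pl (ng y) z)))" using s8 unfolding N_def by blast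
  finally have "\<bar>kap (rho x z)\<bar> \<le> \<bar>kap (N (pl (ng x) y))\<bar> + \<bar>kap (N (gy (ng x) y (pl (ng y) z)))\<bar>"
    unfolding rho_def by (rule mono)
  thus ?thesis unfolding D_def rho_def by (simp add: N_gy)
qed

lemma D_refl: "D x x = 0" unfolding D_def rho_def by (simp add: linv N_e)

lemma D_sep: "D x y = 0 \<Longrightarrow> x = y"
proof -
  assume "D x y = 0"
  hence "pl (ng x) y = e" unfolding D_def rho_def using sep by simp
  hence "pl x (pl (ng x) y) = pl x e" by simp
  thus "x = y" by (simp add: lcan2 rid)
qed

lemma psi_iso: "rho (psi m x) (psi m y) = rho x y"
proof -
  define u where "u = pl (ng m) x"
  define v where "v = pl (ng m) y"
  have "rho (psi m x) (psi m y) = N (pl (ng (pl m (ng u))) (pl m (ng v)))"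
    unfolding rho_def psi_def u_def v_def by simp
  also have "\<dots> = N (pl u (ng v))" by (simp add: transl N_gy negneg)
  also have "\<dots> = N (pl (ng v) u)" by (simp only: comm[of u "ng v"] N_gy)
  also have "\<dots> = N (pl (ng y) x)" unfolding u_def v_def by (simp add: transl N_gy)
  also have "\<dots> = rho x y" using rho_sym unfolding rho_def by simp
  finally show ?thesis .
qed

lemma psi_double: "D (psi m x) x = 2 * D x m"
proof -
  define y where "y = pl (ng m) x"
  have x: "x = pl m y" unfolding y_def by (simp add: lcan2)
  have "rho (psi m x) x = N (pl (ng (pl m (ng y))) (pl m y))"
    unfolding rho_def psi_def y_def by (simp add: lcan2)
  also have "\<dots> = N (sm 2 y)" by (simp add: transl N_gy negneg two)
  finally have "kap (rho (psi m x) x) = 2 * kap (N y)" by (simp add: kap_Nsm)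
  moreover have "rho x m = N y" using rho_sym unfolding rho_def y_def by simp
  ultimately show ?thesis unfolding D_def by simp
qed

lemma psi_fix: "psi m y = y \<Longrightarrow> y = m"
  using psi_double[of m y] D_refl D_sep by simp

lemma small: assumes "(d::real) \<ge> 0" "\<And>n. 2^n * d \<le> K" shows "d = 0"
proof (rule ccontr)
  assume "d \<noteq> 0" hence dp: "d > 0" using assms by simp
  obtain n where "K / d < 2^n" using real_arch_pow[of 2 "K/d"] by auto
  hence "K < 2^n * d" using dp by (simp add: divide_less_eq)
  thus False using assms(2)[of n] by simp
qed

lemma vaisala:
  assumes "\<forall>x. h (g x) = x" "\<forall>x. g (h x) = x" "\<forall>x y. rho (h x) (h y) = rho x y" "h a = a" "h b = b"
  shows "h (mid a b) = mid a b"
proof -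
  define m where "m = mid a b"
  define K where "K = D m a + D a m"
  have main: "\<forall>h g. (\<forall>x. h (g x) = x) \<longrightarrow> (\<forall>x. g (h x) = x) \<longrightarrow> (\<forall>x y. rho (h x) (h y) = rho x y)
     \<longrightarrow> h a = a \<longrightarrow> h b = b \<longrightarrow> 2^n * D (h m) m \<le> K" for n
  proof (induction n)
    case 0
    show ?case
    proof (intro allI impI)
      fix h g :: "'a \<Rightarrow> 'a"
      assume "\<forall>x y. rho (h x) (h y) = rho x y" "h a = a"
      hence "D (h m) a = D m a" unfolding D_def by metis
      thus "2^0 * D (h m) m \<le> K" unfolding K_def using D_tri[where x="h m" and y=a and z=m] by simp
    qed
  next
    case (Suc n)
    show ?case
    proof (intro allI impI)
      fix h g :: "'a \<Rightarrow> 'a"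
      assume hg: "\<forall>x. h (g x) = x" and gh: "\<forall>x. g (h x) = x" and hr: "\<forall>x y. rho (h x) (h y) = rho x y"
        and ha: "h a = a" and hb: "h b = b"
      have gr: "rho (g x) (g y) = rho x y" for x y using hr hg by metis
      have ga: "g a = a" and gb: "g b = b" using gh ha hb by metis+
      define h' where "h' = (\<lambda>x. psi m (g (psi m (h x))))"
      define g' where "g' = (\<lambda>x. g (psi m (h (psi m x))))"
      have "\<forall>x. h' (g' x) = x" unfolding h'_def g'_def by (simp add: hg gh psi_psi)
      moreover have "\<forall>x. g' (h' x) = x" unfolding h'_def g'_def by (simp add: hg gh psi_psi)
      moreover have "\<forall>x y. rho (h' x) (h' y) = rho x y" unfolding h'_def by (simp add: psi_iso gr hr)
      moreover have "h' a = a" unfolding h'_def m_def by (simp add: ha psi_a gb psi_b)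
      moreover have "h' b = b" unfolding h'_def m_def by (simp add: hb psi_b ga psi_a)
      ultimately have IH: "2^n * D (h' m) m \<le> K" using Suc.IH by blast
      have "D (h' m) m = D (g (psi m (h m))) m"
        unfolding h'_def D_def using psi_iso psi_m by metis
      also have "\<dots> = D (g (psi m (h m))) (g (h m))" using gh by simp
      also have "\<dots> = D (psi m (h m)) (h m)" unfolding D_def using gr by simp
      also have "\<dots> = 2 * D (h m) m" by (rule psi_double)
      finally show "2^Suc n * D (h m) m \<le> K" using IH by simp
    qed
  qed
  have "2^n * D (h m) m \<le> K" for n using main[of n] assms by blast
  hence "D (h m) m = 0" by (intro small[of _ K]) (auto simp: D_def)
  thus ?thesis using D_sep m_def by simp
qed

end

lemma GGV_ggv: assumes H: "GGV pl e ng gy sm ph" shows "\<exists>ad sp. ggv pl e ng gy sm ph ad sp"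
proof -
  obtain ad sp where "real_vs_1dim_on {t. \<exists>a. t = norm (ph a) \<or> t = - norm (ph a)} ad sp"
    "\<forall>r a. norm (ph (sm r a)) = sp \<bar>r\<bar> (norm (ph a))"
    "\<forall>a b. norm (ph (pl a b)) \<le> ad (norm (ph a)) (norm (ph b))"
    using H unfolding GGV_def by (elim conjE exE) blast
  hence "ggv pl e ng gy sm ph ad sp" using H unfolding GGV_def ggv_def gyc_def ggv_axioms_def by simp
  thus ?thesis by blast
qed


theorem theorem13:
  fixes plus1 :: "'a \<Rightarrow> 'a \<Rightarrow> 'a" and e1 :: 'a and neg1 :: "'a \<Rightarrow> 'a"
    and gyr1 :: "'a \<Rightarrow> 'a \<Rightarrow> 'a \<Rightarrow> 'a" and smul1 :: "real \<Rightarrow> 'a \<Rightarrow> 'a"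
    and phi1 :: "'a \<Rightarrow> 'v1::real_normed_vector"
    and plus2 :: "'b \<Rightarrow> 'b \<Rightarrow> 'b" and e2 :: 'b and neg2 :: "'b \<Rightarrow> 'b"
    and gyr2 :: "'b \<Rightarrow> 'b \<Rightarrow> 'b \<Rightarrow> 'b" and smul2 :: "real \<Rightarrow> 'b \<Rightarrow> 'b"
    and phi2 :: "'b \<Rightarrow> 'v2::real_normed_vector"
    and T :: "'a \<Rightarrow> 'b"
  assumes "GGV plus1 e1 neg1 gyr1 smul1 phi1"
    and "GGV plus2 e2 neg2 gyr2 smul2 phi2"
    and "surj T"
    and "\<forall>a b. gyrometric plus2 neg2 phi2 (T a) (T b) = gyrometric plus1 neg1 phi1 a b"
  shows "\<forall>a b. gyromidpoint plus2 neg2 gyr2 smul2 (T a) (T b) = T (gyromidpoint plus1 neg1 gyr1 smul1 a b)"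
proof -
  obtain ad1 sp1 where I1: "ggv plus1 e1 neg1 gyr1 smul1 phi1 ad1 sp1" using GGV_ggv[OF assms(1)] by blast
  obtain ad2 sp2 where I2: "ggv plus2 e2 neg2 gyr2 smul2 phi2 ad2 sp2" using GGV_ggv[OF assms(2)] by blast
  interpret A: ggv plus1 e1 neg1 gyr1 smul1 phi1 ad1 sp1 by (rule I1)
  interpret B: ggv plus2 e2 neg2 gyr2 smul2 phi2 ad2 sp2 by (rule I2)
  have hT: "B.rho (T x) (T y) = A.rho x y" for x y
    using assms(4) unfolding gyrometric_def A.rho_def B.rho_def A.N_def B.N_def by blast
  have Tinj: "inj T"
  proof (rule injI)
    fix x y assume "T x = T y"
    hence "A.rho x y = A.rho x x" using hT by metis
    hence "A.D x y = 0" unfolding A.D_def using A.D_refl[of x] unfolding A.D_def by simp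
    thus "x = y" by (rule A.D_sep)
  qed
  define Ti where "Ti = inv T"
  have TTi: "T (Ti z) = z" for z unfolding Ti_def using assms(3) by (simp add: surj_f_inv_f)
  have TiT: "Ti (T x) = x" for x unfolding Ti_def using Tinj by simp
  have hTi: "A.rho (Ti p) (Ti q) = B.rho p q" for p q using hT[of "Ti p" "Ti q"] by (simp add: TTi)
  show ?thesis
  proof (intro allI)
    fix a b
    define m1 where "m1 = A.mid a b"
    define m2 where "m2 = B.mid (T a) (T b)"
    define h where "h = (\<lambda>x. A.psi m1 (Ti (B.psi m2 (T x))))"
    define g where "g = (\<lambda>x. Ti (B.psi m2 (T (A.psi m1 x))))"
    have "\<forall>x. h (g x) = x" unfolding h_def g_def by (simp add: TTi TiT A.psi_psi B.psi_psi)
    moreover have "\<forall>x. g (h x) = x" unfolding h_def g_def by (simp add: TTi TiT A.psi_psi B.psi_psi)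
    moreover have "\<forall>x y. A.rho (h x) (h y) = A.rho x y" unfolding h_def
      by (simp add: A.psi_iso B.psi_iso hTi hT)
    moreover have "h a = a" unfolding h_def m1_def m2_def by (simp add: B.psi_a TiT A.psi_b)
    moreover have "h b = b" unfolding h_def m1_def m2_def by (simp add: B.psi_b TiT A.psi_a)
    ultimately have "h (A.mid a b) = A.mid a b" by (rule A.vaisala)
    hence "A.psi m1 (A.psi m1 (Ti (B.psi m2 (T m1)))) = A.psi m1 m1" unfolding h_def m1_def by simp
    hence "Ti (B.psi m2 (T m1)) = m1" by (simp add: A.psi_psi A.psi_m)
    hence "B.psi m2 (T m1) = T m1" by (metis TTi)
    hence "T m1 = m2" by (rule B.psi_fix)
    thus "gyromidpoint plus2 neg2 gyr2 smul2 (T a) (T b) = T (gyromidpoint plus1 neg1 gyr1 smul1 a b)"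
      unfolding m1_def m2_def by (simp add: A.midpoint_eq B.midpoint_eq)
  qed
qed

end
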